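(* For all integers $m,n,k$ with $n\ge1$, $0\le m\le n$ and $k\ge0$, $$\sum_{j=0}^{n-1}A_{n,n-1,j}\sum_{l\ge0}\mathcal P^+_{m+j}(k,l)=\mathcal P^+_{m+n-1}(k,0)+(xy)^{n-1}\sum_{l\ge0}\mathcal P_m(0,n-k+l).$$
   Context: Three-step paths consist of up-steps $(1,1)$, level steps $(1,0)$ and down-steps $(1,-1)$. Weights: $w((1,1))=1$, $w((1,0))=x+y$, $w((1,-1))=xy$, and the weight $w(P)$ of a path is the product of the weights of its steps. $\mathcal P_n(k,l)=\sum_P w(P)$ over all three-step paths from $(0,k)$ to $(n,l)$ (zero if no such path); $\mathcal P^+_n(k,l)$ is the same sum restricted to paths never running below the $x$-axis. The last row of the matrix $A(n)$ is: $A_{n,n-1,n-1}=\frac{xy-(n-1)(x+y)}{xy}$ and, for $0\le j\le n-2$, $$A_{n,n-1,j}=\frac{(-1)^{n+j}}{xy}\sum_{l=j}^{n}\left(\binom lj\binom{n+j-1-l}{j}x^{l-j}y^{n-1-l}+\binom lj\binom{n+j-l}{j}x^{l-j}y^{n-l}\right),$$ with binomial coefficients $\binom ab$ equal to $0$ if $b<0$ or $a<b$. *)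

theory Defs
  imports Main
begin

text \<open>Three-step paths of length n are encoded by their list of vertical
increments, each in {-1,0,1}: 1 = up-step (1,1), 0 = level step (1,0),
-1 = down-step (1,-1).\<close>

definition steps :: "nat \<Rightarrow> int list set" where
  "steps n = {s. length s = n \<and> set s \<subseteq> {-1, 0, 1}}"

definition step_weight :: "'a::field \<Rightarrow> 'a \<Rightarrow> int \<Rightarrow> 'a" where
  "step_weight x y d = (if d = 1 then 1 else if d = 0 then x + y else x * y)"

definition path_weight :: "'a::field \<Rightarrow> 'a \<Rightarrow> int list \<Rightarrow> 'a" where
  "path_weight x y s = prod_list (map (step_weight x y) s)"

definition PP :: "'a::field \<Rightarrow> 'a \<Rightarrow> nat \<Rightarrow> int \<Rightarrow> int \<Rightarrow> 'a" where
  "PP x y n k l = (\<Sum>s\<in>{s \<in> steps n. k + sum_list s = l}. path_weight x y s)"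

definition PPplus :: "'a::field \<Rightarrow> 'a \<Rightarrow> nat \<Rightarrow> int \<Rightarrow> int \<Rightarrow> 'a" where
  "PPplus x y n k l = (\<Sum>s\<in>{s \<in> steps n. k + sum_list s = l \<and>
        (\<forall>i\<le>n. 0 \<le> k + sum_list (take i s))}. path_weight x y s)"

definition sum_nonneg :: "(int \<Rightarrow> 'a::comm_monoid_add) \<Rightarrow> 'a" where
  "sum_nonneg f = sum f {l. 0 \<le> l \<and> f l \<noteq> 0}"

definition binom :: "int \<Rightarrow> int \<Rightarrow> int" where
  "binom a b = (if b < 0 \<or> a < b then 0 else int (nat a choose nat b))"

definition A_last :: "'a::field \<Rightarrow> 'a \<Rightarrow> nat \<Rightarrow> nat \<Rightarrow> 'a" where
  "A_last x y n j =
    (if j = n - 1 then (x * y - of_nat (n - 1) * (x + y)) / (x * y)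
     else ((-1) ^ (n + j) / (x * y)) *
       (\<Sum>l\<in>{int j..int n}.
          of_int (binom l (int j) * binom (int n + int j - 1 - l) (int j))
            * x powi (l - int j) * y powi (int n - 1 - l)
        + of_int (binom l (int j) * binom (int n + int j - l) (int j))
            * x powi (l - int j) * y powi (int n - l)))"

end

theory Submission
  imports Defs "HOL-Computational_Algebra.Formal_Power_Series"
begin

unbundle fps_syntax


lemma steps_0: "steps 0 = {[]}"
  by (auto simp: steps_def)

lemma finite_steps: "finite (steps M)"
proof -
  have "steps M = {xs. set xs \<subseteq> {-1,0,1} \<and> length xs = M}" by (auto simp: steps_def)
  thus ?thesis by (simp add: finite_lists_length_eq)
qed

lemma steps_Suc: "steps (Suc M) = (\<lambda>(d,s). d # s) ` ({-1,0,1} \<times> steps M)"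
  apply (auto simp: steps_def)
  subgoal for s by (cases s) (auto simp: image_iff)
  done

lemma path_weight_Cons: "path_weight x y (d # s) = step_weight x y d * path_weight x y s"
  by (simp add: path_weight_def)

lemma sum_steps_Suc:
  fixes x y :: "'a::field"
  shows "(\<Sum>s\<in>{s \<in> steps (Suc M). Pr s}. path_weight x y s)
   = (\<Sum>d\<in>{-1,0,1}. step_weight x y d * (\<Sum>s\<in>{s \<in> steps M. Pr (d # s)}. path_weight x y s))"
proof -
  have eq: "{s \<in> steps (Suc M). Pr s} = (\<lambda>(d,s). d # s) ` (SIGMA d:{-1,0,1}. {s \<in> steps M. Pr (d # s)})"
    by (auto simp: steps_Suc)
  have inj: "inj_on (\<lambda>(d,s). d # s) (SIGMA d:{-1::int,0,1}. {s \<in> steps M. Pr (d # s)})"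
    by (auto simp: inj_on_def)
  have fin: "\<And>d. finite {s \<in> steps M. Pr (d # s)}" using finite_steps by auto
  show ?thesis
  proof -
    have "(\<Sum>s\<in>{s \<in> steps (Suc M). Pr s}. path_weight x y s)
       = (\<Sum>(d,s)\<in>(SIGMA d:{-1,0,1}. {s \<in> steps M. Pr (d # s)}). step_weight x y d * path_weight x y s)"
      unfolding eq sum.reindex[OF inj] by (simp add: comp_def case_prod_unfold path_weight_Cons)
    also have "\<dots> = (\<Sum>d\<in>{-1,0,1}. \<Sum>s\<in>{s \<in> steps M. Pr (d # s)}. step_weight x y d * path_weight x y s)"
      by (rule sum.Sigma[symmetric]) (auto simp: fin)
    finally show ?thesis by (simp add: sum_distrib_left)
  qed
qed

lemma sw: "step_weight x y (-1) = x*y" "step_weight x y 0 = x+y" "step_weight x y 1 = 1"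
  by (auto simp: step_weight_def)

lemma PP_Suc:
  "PP x y (Suc M) k l = x*y * PP x y M (k-1) l + (x+y) * PP x y M k l + PP x y M (k+1) l"
  unfolding PP_def sum_steps_Suc
  apply (simp add: sw add.commute add.left_commute add_diff_eq diff_add_eq)
  done

lemma PP_0: "PP x y 0 k l = (if k = l then 1 else 0)"
proof -
  have "{s \<in> steps 0. k + sum_list s = l} = (if k = l then {[]} else {})" by (auto simp: steps_0)
  thus ?thesis by (simp add: PP_def path_weight_def)
qed

lemma all_le_Suc_conv: "(\<forall>i\<le>Suc M. P i) \<longleftrightarrow> P 0 \<and> (\<forall>i\<le>M. P (Suc i))"
  apply auto
  subgoal for i by (cases i) auto
  done

lemma PPplus_Suc:
  "PPplus x y (Suc M) k l = (if k < 0 then 0 else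
     x*y * PPplus x y M (k-1) l + (x+y) * PPplus x y M k l + PPplus x y M (k+1) l)"
proof -
  have c: "\<And>d s. (k + sum_list (d#s) = l \<and> (\<forall>i\<le>Suc M. 0 \<le> k + sum_list (take i (d#s))))
     \<longleftrightarrow> 0 \<le> k \<and> ((k+d) + sum_list s = l \<and> (\<forall>i\<le>M. 0 \<le> (k+d) + sum_list (take i s)))"
    unfolding all_le_Suc_conv by (auto simp: algebra_simps)
  show ?thesis
    unfolding PPplus_def sum_steps_Suc c
    apply (cases "k < 0") apply (simp_all add: sw add.commute add.left_commute add_diff_eq diff_add_eq)
    done
qed

lemma PPplus_0: "PPplus x y 0 k l = (if k = l \<and> 0 \<le> k then 1 else 0)"
proof -
  have "{s \<in> steps 0. k + sum_list s = l \<and> (\<forall>i\<le>0. 0 \<le> k + sum_list (take i s))}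
     = (if k = l \<and> 0 \<le> k then {[]} else {})" by (auto simp: steps_0)
  thus ?thesis by (simp add: PPplus_def path_weight_def)
qed


definition St :: "'a::field \<Rightarrow> 'a \<Rightarrow> (int \<Rightarrow> 'a) \<Rightarrow> (int \<Rightarrow> 'a)" where
  "St x y f = (\<lambda>i. f (i-1) + (x+y) * f i + x*y * f (i+1))"

definition dl :: "int \<Rightarrow> 'a::field" where "dl i = (if i = 0 then 1 else 0)"

definition pp :: "'a::field \<Rightarrow> 'a \<Rightarrow> nat \<Rightarrow> int \<Rightarrow> 'a" where
  "pp x y M = (St x y ^^ M) dl"

lemma pp_0: "pp x y 0 = dl" by (simp add: pp_def)
lemma pp_Suc: "pp x y (Suc M) = St x y (pp x y M)" by (simp add: pp_def)
lemma pp_add: "(St x y ^^ j) (pp x y m) = pp x y (m + j)"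
proof -
  have "pp x y (m + j) = pp x y (j + m)" by (simp add: add.commute)
  thus ?thesis unfolding pp_def funpow_add by simp
qed

lemma PP_pp: "PP x y M k l = pp x y M (l - k)"
proof (induction M arbitrary: k l)
  case 0 thus ?case by (simp add: PP_0 pp_0 dl_def)
next
  case (Suc M)
  show ?case unfolding PP_Suc Suc pp_Suc St_def
    by (simp add: algebra_simps diff_diff_eq2)
qed

lemma pp_supp: "int M < i \<or> i < - int M \<Longrightarrow> pp x y M i = 0"
proof (induction M arbitrary: i)
  case 0 thus ?case by (auto simp: pp_0 dl_def)
next
  case (Suc M)
  have "pp x y M (i-1) = 0" "pp x y M i = 0" "pp x y M (i+1) = 0" using Suc by auto
  thus ?case by (simp add: pp_Suc St_def)
qed

lemma PPplus_refl_nat: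
  fixes x y :: "'a::field"
  assumes "0 \<le> l"
  shows "PPplus x y M (int K - 1) l = pp x y M (l - int K + 1) - (x*y)^K * pp x y M (l + int K + 1)"
  using assms
proof (induction M arbitrary: K)
  case 0 thus ?case by (auto simp: PPplus_0 pp_0 dl_def)
next
  case (Suc M)
  show ?case
  proof (cases K)
    case 0 thus ?thesis by (simp add: PPplus_Suc)
  next
    case (Suc K')
    have k: "int K - 1 = int K'" using Suc by simp
    have h1: "PPplus x y M (int K' - 1) l = pp x y M (l - int K' + 1) - (x*y)^K' * pp x y M (l + int K' + 1)"
      using Suc.IH[of K'] Suc.prems by simp
    have h2: "PPplus x y M (int K') l = pp x y M (l - int K') - (x*y)^(Suc K') * pp x y M (l + int K' + 2)"
      using Suc.IH[of "Suc K'"] Suc.prems by (simp add: algebra_simps)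
    have h3: "PPplus x y M (int K' + 1) l = pp x y M (l - int K' - 1) - (x*y)^(Suc (Suc K')) * pp x y M (l + int K' + 3)"
      using Suc.IH[of "Suc (Suc K')"] Suc.prems by (simp add: algebra_simps)
    have "\<not> int K' < 0" by simp
    hence "PPplus x y (Suc M) (int K') l = x*y * PPplus x y M (int K' - 1) l + (x+y) * PPplus x y M (int K') l + PPplus x y M (int K' + 1) l"
      unfolding PPplus_Suc by simp
    also have "\<dots> = pp x y (Suc M) (l - int K + 1) - (x*y)^K * pp x y (Suc M) (l + int K + 1)"
      unfolding h1 h2 h3 \<open>K = Suc K'\<close> pp_Suc St_def by (simp add: algebra_simps)
    finally show ?thesis unfolding k .
  qed
qed

lemma PPplus_refl:
  fixes x y :: "'a::field"
  assumes "0 \<le> l" "0 \<le> k"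
  shows "PPplus x y M k l = pp x y M (l - k) - (x*y)^nat (k+1) * pp x y M (l + k + 2)"
  using PPplus_refl_nat[OF assms(1), of x y M "nat (k+1)"] assms by (simp add: ac_simps)


fun Hop :: "'a::field \<Rightarrow> 'a \<Rightarrow> nat \<Rightarrow> (int \<Rightarrow> 'a) \<Rightarrow> int \<Rightarrow> 'a" where
  "Hop x y 0 f = f"
| "Hop x y (Suc n) f = (\<lambda>i. Hop x y n f (i-1) + (x*y)^(Suc n) * f (i + int (Suc n)))"

definition symq :: "'a::field \<Rightarrow> (int \<Rightarrow> 'a) \<Rightarrow> bool" where
  "symq q f \<longleftrightarrow> (\<forall>d::nat. f (- int d) = q^d * f (int d))"

lemma Hop_rec:
  "Hop x y (Suc (Suc n)) f i = Hop x y (Suc n) f (i-1) + x*y * Hop x y (Suc n) f (i+1) - x*y * Hop x y n f i"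
  by (simp add: algebra_simps)

lemma symq_lin: "symq q f \<Longrightarrow> symq q g \<Longrightarrow> symq q (\<lambda>i. a * f i + b * g i)"
  by (simp add: symq_def algebra_simps)

lemma symq_Zs: assumes "symq q g" shows "symq q (\<lambda>i. g (i-1) + q * g (i+1))"
  unfolding symq_def
proof
  fix d :: nat
  show "g (- int d - 1) + q * g (- int d + 1) = q ^ d * (g (int d - 1) + q * g (int d + 1))"
  proof (cases d)
    case 0 thus ?thesis by simp
  next
    case (Suc d')
    have a: "g (- int d - 1) = q^(Suc (Suc d')) * g (int d + 1)"
      using assms[unfolded symq_def, rule_format, of "Suc (Suc d')"] Suc by (simp add: algebra_simps)
    have b: "g (- int d + 1) = q^d' * g (int d - 1)"
      using assms[unfolded symq_def, rule_format, of d'] Suc by (simp add: algebra_simps)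
    have qd: "q^d = q * q^d'" using Suc by simp
    have "g (- int d - 1) + q * g (- int d + 1) = q^(Suc (Suc d')) * g (int d + 1) + q * (q^d' * g (int d - 1))"
      by (simp only: a b)
    also have "\<dots> = q ^ d * (g (int d - 1) + q * g (int d + 1))" by (simp add: qd algebra_simps)
    finally show ?thesis .
  qed
qed

lemma symq_St: assumes "symq (x*y) g" shows "symq (x*y) (St x y g)"
proof -
  have "St x y g = (\<lambda>i. 1 * (g (i-1) + x*y * g (i+1)) + (x+y) * g i)"
    by (auto simp: St_def fun_eq_iff algebra_simps)
  thus ?thesis using symq_lin[OF symq_Zs[OF assms] assms, of 1 "x+y"] by simp
qed

lemma symq_dl: "symq q dl"
  by (auto simp: symq_def dl_def)

lemma symq_pp: "symq (x*y) (pp x y M)"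
  by (induction M) (simp_all add: pp_0 pp_Suc symq_dl symq_St)

lemma symq_Hop_aux:
  assumes "symq (x*y) f"
  shows "symq (x*y) (Hop x y n f) \<and> symq (x*y) (Hop x y (Suc n) f)"
proof (induction n)
  case 0
  have "Hop x y (Suc 0) f = (\<lambda>i. f (i-1) + x*y * f (i+1))" by (simp add: fun_eq_iff)
  thus ?case using assms symq_Zs[OF assms] by simp
next
  case (Suc n)
  have "Hop x y (Suc (Suc n)) f = (\<lambda>i. 1 * (Hop x y (Suc n) f (i-1) + x*y * Hop x y (Suc n) f (i+1)) + (- (x*y)) * Hop x y n f i)"
    by (auto simp: fun_eq_iff Hop_rec[of x y n f] simp del: Hop.simps)
  thus ?case using Suc.IH symq_lin[OF symq_Zs[OF conjunct2[OF Suc.IH]] conjunct1[OF Suc.IH], of 1 "-(x*y)"] by simp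
qed

lemma symq_Hop: "symq (x*y) f \<Longrightarrow> symq (x*y) (Hop x y n f)"
  using symq_Hop_aux by blast

lemma Hop_supp:
  assumes "\<And>i. int K < i \<or> i < - int K \<Longrightarrow> f i = 0"
  shows "int K + int n < i \<or> i < - (int K + int n) \<Longrightarrow> Hop x y n f i = 0"
proof (induction n arbitrary: i)
  case 0 thus ?case using assms by simp
next
  case (Suc n)
  have "Hop x y n f (i-1) = 0" using Suc by auto
  moreover have "f (i + int (Suc n)) = 0" using Suc assms by auto
  ultimately show ?case by simp
qed




definition Fx :: "'a::field \<Rightarrow> nat \<Rightarrow> 'a fps" where
  "Fx a j = Abs_fps (\<lambda>i. of_nat ((i + j) choose j) * a^i)"

definition Dx :: "'a::field \<Rightarrow> 'a fps" where "Dx a = 1 - fps_const a * fps_X"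

lemma Dx_nth: "(Dx a * F) $ i = F $ i - a * (if i = 0 then 0 else F $ (i - 1))"
proof -
  have "Dx a * F = F - fps_const a * (fps_X * F)" by (simp add: Dx_def algebra_simps)
  thus ?thesis by simp
qed

lemma Fx_Suc: "Dx a * Fx a (Suc j) = Fx a j"
proof (rule fps_ext)
  fix i show "(Dx a * Fx a (Suc j)) $ i = Fx a j $ i"
  proof (cases i)
    case 0 thus ?thesis unfolding Dx_nth by (simp add: Fx_def binomial_eq_0)
  next
    case (Suc i')
    have "of_nat ((i + Suc j) choose Suc j) * a^i - a * (of_nat ((i' + Suc j) choose Suc j) * a^i')
        = (of_nat ((i + j) choose j) * a^i :: 'a)"
      using Suc by (simp add: algebra_simps)
    thus ?thesis using Suc unfolding Dx_nth by (simp add: Fx_def)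
  qed
qed

lemma Fx_0: "Dx a * Fx a 0 = 1"
proof (rule fps_ext)
  fix i show "(Dx a * Fx a 0) $ i = 1 $ i"
    unfolding Dx_nth by (cases i) (simp_all add: Fx_def)
qed

definition Pj :: "'a::field \<Rightarrow> 'a \<Rightarrow> nat \<Rightarrow> 'a fps" where "Pj x y j = Fx x j * Fx y j"

lemma Pj_Suc: "Dx x * (Dx y * Pj x y (Suc j)) = Pj x y j"
proof -
  have "Dx x * (Dx y * Pj x y (Suc j)) = (Dx x * Fx x (Suc j)) * (Dx y * Fx y (Suc j))"
    by (simp add: Pj_def ac_simps)
  thus ?thesis by (simp add: Fx_Suc Pj_def)
qed

lemma Pj_0: "Dx x * (Dx y * Pj x y 0) = 1"
proof -
  have "Dx x * (Dx y * Pj x y 0) = (Dx x * Fx x 0) * (Dx y * Fx y 0)"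
    by (simp add: Pj_def ac_simps)
  thus ?thesis by (simp add: Fx_0)
qed

lemma DD_nth: "(Dx x * (Dx y * F)) $ i = F $ i - (x+y) * (if i = 0 then 0 else F $ (i-1))
      + x*y * (if i < 2 then 0 else F $ (i - 2))"
  unfolding Dx_nth by (cases i; cases "i - 1") (auto simp: algebra_simps)

definition e :: "'a::field \<Rightarrow> 'a \<Rightarrow> nat \<Rightarrow> nat \<Rightarrow> 'a" where
  "e x y n j = (if j \<le> n then Pj x y j $ (n - j) else 0)"

lemma e_rec: "e x y (Suc (Suc n)) j = (if j = 0 then 0 else e x y (Suc n) (j-1))
      + (x+y) * e x y (Suc n) j - x*y * e x y n j"
proof (cases "j \<le> Suc (Suc n)")
  case False thus ?thesis by (simp add: e_def)
next
  case True
  define i where "i = Suc (Suc n) - j"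
  show ?thesis
  proof (cases j)
    case 0
    have "(Dx x * (Dx y * Pj x y 0)) $ i = 0" unfolding Pj_0 using 0 i_def by simp
    hence h: "Pj x y 0 $ Suc (Suc n) - (x + y) * Pj x y 0 $ Suc n + x * y * Pj x y 0 $ n = 0"
      unfolding DD_nth using 0 i_def by simp
    have "Pj x y 0 $ Suc (Suc n) = (x + y) * Pj x y 0 $ Suc n - x * y * Pj x y 0 $ n
       + (Pj x y 0 $ Suc (Suc n) - (x + y) * Pj x y 0 $ Suc n + x * y * Pj x y 0 $ n)"
      by (simp add: algebra_simps)
    also have "\<dots> = (x + y) * Pj x y 0 $ Suc n - x * y * Pj x y 0 $ n" using h by simp
    finally show ?thesis using 0 by (simp add: e_def)
  next
    case (Suc j')
    have "(Dx x * (Dx y * Pj x y (Suc j'))) $ i = Pj x y j' $ i" unfolding Pj_Suc ..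
    thus ?thesis unfolding DD_nth using Suc i_def True
      by (auto simp: e_def Suc_diff_le diff_diff_add split: if_splits)
        (simp_all add: algebra_simps eq_diff_eq diff_eq_eq)
  qed
qed

lemma e_diag: "e x y N N = 1"
  by (simp add: e_def Pj_def Fx_def)

lemma e_sub: "e x y (Suc N) N = of_nat (Suc N) * (x+y)"
  by (simp add: e_def Pj_def Fx_def algebra_simps)


lemma St_pow_Suc: "(St x y ^^ Suc j) f i = (St x y ^^ j) f (i-1) + (x+y) * (St x y ^^ j) f i + x*y*(St x y ^^ j) f (i+1)"
  by (simp add: St_def)

lemma e_zero: "n < j \<Longrightarrow> e x y n j = 0" by (simp add: e_def)

abbreviation LL :: "'a::field \<Rightarrow> 'a \<Rightarrow> nat \<Rightarrow> (int \<Rightarrow> 'a) \<Rightarrow> int \<Rightarrow> 'a" where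
  "LL x y n f i \<equiv> (\<Sum>j\<le>n. (-1)^j * e x y n j * (St x y ^^ j) f i)"

lemma LL_step:
  "LL x y (Suc (Suc n)) f i = - LL x y (Suc n) f (i-1) - x*y * LL x y (Suc n) f (i+1) - x*y * LL x y n f i"
proof -
  let ?W = "\<lambda>j. (St x y ^^ j) f"
  have "LL x y (Suc (Suc n)) f i =
     (\<Sum>j\<le>Suc (Suc n). (-1)^j * (if j = 0 then 0 else e x y (Suc n) (j-1)) * ?W j i)
     + (x+y) * (\<Sum>j\<le>Suc (Suc n). (-1)^j * e x y (Suc n) j * ?W j i)
     - x*y * (\<Sum>j\<le>Suc (Suc n). (-1)^j * e x y n j * ?W j i)"
    unfolding e_rec by (simp add: sum_distrib_left sum.distrib sum_subtractf algebra_simps)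
  also have "(\<Sum>j\<le>Suc (Suc n). (-1)^j * (if j = 0 then 0 else e x y (Suc n) (j-1)) * ?W j i)
      = (\<Sum>j\<le>Suc n. (-1)^(Suc j) * e x y (Suc n) j * ?W (Suc j) i)"
    by (subst sum.atMost_Suc_shift) simp
  also have "\<dots> = - LL x y (Suc n) f (i-1) - (x+y) * LL x y (Suc n) f i - x*y * LL x y (Suc n) f (i+1)"
    unfolding St_pow_Suc by (simp add: sum_distrib_left sum.distrib sum_subtractf algebra_simps sum_negf)
  also have "(\<Sum>j\<le>Suc (Suc n). (-1)^j * e x y (Suc n) j * ?W j i) = LL x y (Suc n) f i"
    by (simp add: e_zero)
  also have "(\<Sum>j\<le>Suc (Suc n). (-1)^j * e x y n j * ?W j i) = LL x y n f i"
    by (simp add: e_zero)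
  finally show ?thesis by (simp add: algebra_simps)
qed

lemma E_aux:
  "(\<forall>i. LL x y n f i = (-1)^n * Hop x y n f i) \<and> (\<forall>i. LL x y (Suc n) f i = (-1)^(Suc n) * Hop x y (Suc n) f i)"
proof (induction n)
  case 0
  have "e x y 1 0 = x + y" using e_sub[of x y 0] by simp
  thus ?case by (simp add: e_diag St_def algebra_simps)
next
  case (Suc n)
  have "\<forall>i. LL x y (Suc (Suc n)) f i = (-1)^(Suc (Suc n)) * Hop x y (Suc (Suc n)) f i"
  proof
    fix i
    show "LL x y (Suc (Suc n)) f i = (-1)^(Suc (Suc n)) * Hop x y (Suc (Suc n)) f i"
    proof -
      have h1: "LL x y (Suc n) f (i-1) = (-1)^(Suc n) * Hop x y (Suc n) f (i-1)" using Suc.IH by blast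
      have h2: "LL x y (Suc n) f (i+1) = (-1)^(Suc n) * Hop x y (Suc n) f (i+1)" using Suc.IH by blast
      have h3: "LL x y n f i = (-1)^n * Hop x y n f i" using Suc.IH by blast
      show ?thesis unfolding LL_step h1 h2 h3 Hop_rec[of x y n f i]
        by (simp add: algebra_simps del: Hop.simps)
    qed
  qed
  thus ?case using Suc.IH by blast
qed

lemma E_lemma: "LL x y n f i = (-1)^n * Hop x y n f i"
  using E_aux by blast


lemma cf:
  fixes x y :: "'a::field"
  assumes "j \<le> N"
  shows "(\<Sum>l\<in>{int j..int N}. of_int (binom l (int j) * binom (int N + int j - l) (int j))
            * x powi (l - int j) * y powi (int N - l)) = e x y N j"
proof -
  have img: "{int j..int N} = (\<lambda>i. int j + int i) ` {0..N-j}"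
  proof
    show "{int j..int N} \<subseteq> (\<lambda>i. int j + int i) ` {0..N-j}"
    proof
      fix l assume "l \<in> {int j..int N}"
      hence "l = int j + int (nat (l - int j))" "nat (l - int j) \<in> {0..N-j}" by auto
      thus "l \<in> (\<lambda>i. int j + int i) ` {0..N-j}" by blast
    qed
  qed (use assms in auto)
  have inj: "inj_on (\<lambda>i. int j + int i) {0..N-j}" by (auto simp: inj_on_def)
  have "(\<Sum>l\<in>{int j..int N}. of_int (binom l (int j) * binom (int N + int j - l) (int j))
            * x powi (l - int j) * y powi (int N - l))
     = (\<Sum>i\<in>{0..N-j}. of_nat ((i + j) choose j) * x^i * (of_nat ((N - j - i + j) choose j) * y^(N - j - i)))"
    unfolding img sum.reindex[OF inj] comp_def
  proof (rule sum.cong[OF refl])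
    fix i assume i: "i \<in> {0..N-j}"
    have b1: "binom (int j + int i) (int j) = int ((i + j) choose j)"
      by (simp add: binom_def nat_add_distrib add.commute)
    have q1: "int N + int j - (int j + int i) = int (N - i)" using i assms by auto
    have q2: "N - j - i + j = N - i" "j \<le> N - i" using i assms by auto
    have b2: "binom (int N + int j - (int j + int i)) (int j) = int ((N - j - i + j) choose j)"
      unfolding q1 q2 using q2 by (simp add: binom_def)
    have p1: "x powi (int j + int i - int j) = x ^ i" by simp
    have p2: "y powi (int N - (int j + int i)) = y ^ (N - j - i)"
    proof -
      have eq: "int N - (int j + int i) = int (N - j - i)" using i assms by auto
      show ?thesis by (subst eq) (rule power_int_of_nat)
    qed
    show "of_int (binom (int j + int i) (int j) * binom (int N + int j - (int j + int i)) (int j))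
            * x powi (int j + int i - int j) * y powi (int N - (int j + int i))
        = of_nat ((i + j) choose j) * x^i * (of_nat ((N - j - i + j) choose j) * y^(N - j - i))"
      unfolding b1 b2 p1 p2 by simp
  qed
  also have "\<dots> = e x y N j"
    using assms by (simp add: e_def Pj_def fps_mult_nth Fx_def atLeast0AtMost mult_ac)
  finally show ?thesis .
qed

lemma A_e:
  fixes x y :: "'a::field"
  assumes "j < n - 1"
  shows "A_last x y n j = ((-1)^(n+j) / (x*y)) * (e x y (n-1) j + e x y n j)"
proof -
  have n: "n = Suc (n - 1)" using assms by simp
  let ?T1 = "\<lambda>l. of_int (binom l (int j) * binom (int n + int j - 1 - l) (int j))
            * x powi (l - int j) * y powi (int n - 1 - l)"
  let ?T2 = "\<lambda>l. of_int (binom l (int j) * binom (int n + int j - l) (int j))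
            * x powi (l - int j) * y powi (int n - l)"
  have s1: "sum ?T1 {int j..int n} = e x y (n-1) j"
  proof -
    have "{int j..int n} = insert (int n) {int j..int (n-1)}" using assms by auto
    moreover have "?T1 (int n) = 0" by (simp add: binom_def)
    moreover have "int n \<notin> {int j..int (n-1)}" using assms by auto
    ultimately have "sum ?T1 {int j..int n} = sum ?T1 {int j..int (n-1)}"
      by (simp only: sum.insert[OF finite_atLeastAtMost_int]) simp
    also have "\<dots> = e x y (n-1) j"
    proof -
      have "sum ?T1 {int j..int (n-1)} = (\<Sum>l\<in>{int j..int (n-1)}. of_int (binom l (int j) * binom (int (n-1) + int j - l) (int j))
            * x powi (l - int j) * y powi (int (n-1) - l))"
        using assms by (intro sum.cong) (auto simp: of_nat_diff algebra_simps)
      thus ?thesis using cf[of j "n-1" x y] assms by simp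
    qed
    finally show ?thesis .
  qed
  have s2: "sum ?T2 {int j..int n} = e x y n j" using cf[of j n x y] assms by simp
  have "j \<noteq> n - 1" using assms by simp
  hence "A_last x y n j = ((-1)^(n+j) / (x*y)) * (\<Sum>l\<in>{int j..int n}. ?T1 l + ?T2 l)"
    by (simp add: A_last_def)
  also have "\<dots> = ((-1)^(n+j) / (x*y)) * (e x y (n-1) j + e x y n j)"
    by (simp only: sum.distrib s1 s2)
  finally show ?thesis .
qed

lemma A_top:
  "A_last x y n (n-1) = (x * y - of_nat (n - 1) * (x + y)) / (x * y)"
  by (simp add: A_last_def)


lemma alpha:
  fixes x y :: "'a::field"
  assumes x: "x \<noteq> 0" and y: "y \<noteq> 0"
  shows "x*y * (\<Sum>j<Suc n'. A_last x y (Suc n') j * (St x y ^^ j) f i)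
     = Hop x y (Suc n') f i - Hop x y n' f i - (St x y ^^ (Suc n')) f i + (1 + x + y + x*y) * (St x y ^^ n') f i"
proof -
  let ?n = "Suc n'"
  let ?W = "\<lambda>j. (St x y ^^ j) f i"
  define s :: 'a where "s = (-1)^n'"
  have sq: "s * s = 1" unfolding s_def by (induct n') auto
  have sn: "(-1::'a)^?n = - s" unfolding s_def by simp
  have S1: "(\<Sum>j<n'. (-1)^j * e x y n' j * ?W j) = s * Hop x y n' f i - s * ?W n'"
  proof -
    have "(\<Sum>j<n'. (-1)^j * e x y n' j * ?W j) + s * ?W n' = LL x y n' f i"
      unfolding lessThan_Suc_atMost[symmetric] sum.lessThan_Suc s_def by (simp add: e_diag)
    thus ?thesis unfolding E_lemma s_def by (simp add: algebra_simps)
  qed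
  have S2: "(\<Sum>j<n'. (-1)^j * e x y ?n j * ?W j) = - s * Hop x y ?n f i - s * e x y ?n n' * ?W n' + s * ?W ?n"
  proof -
    have "(\<Sum>j<n'. (-1)^j * e x y ?n j * ?W j) + s * e x y ?n n' * ?W n' - s * ?W ?n = LL x y ?n f i"
      unfolding lessThan_Suc_atMost[symmetric] sum.lessThan_Suc s_def by (simp add: e_diag)
    thus ?thesis unfolding E_lemma sn by (simp add: algebra_simps)
  qed
  have A1: "x*y * (\<Sum>j<n'. A_last x y ?n j * ?W j) = (-1)^?n * ((\<Sum>j<n'. (-1)^j * e x y n' j * ?W j) + (\<Sum>j<n'. (-1)^j * e x y ?n j * ?W j))"
  proof -
    have "x*y * (\<Sum>j<n'. A_last x y ?n j * ?W j) = (\<Sum>j<n'. (-1)^?n * ((-1)^j * e x y n' j * ?W j + (-1)^j * e x y ?n j * ?W j))"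
      unfolding sum_distrib_left
    proof (rule sum.cong[OF refl])
      fix j assume "j \<in> {..<n'}"
      hence "A_last x y ?n j = ((-1)^(?n+j) / (x*y)) * (e x y n' j + e x y ?n j)" using A_e[of j ?n x y] by simp
      hence "x*y*A_last x y ?n j = (x*y) * ((-1)^(?n+j) / (x*y)) * (e x y n' j + e x y ?n j)" by simp
      also have "\<dots> = (-1)^(?n+j) * (e x y n' j + e x y ?n j)" using x y by simp
      finally have h: "x*y*A_last x y ?n j = (-1)^(?n+j) * (e x y n' j + e x y ?n j)" .
      have "x*y * (A_last x y ?n j * ?W j) = (x*y*A_last x y ?n j) * ?W j" by (simp add: mult.assoc)
      also have "\<dots> = (-1)^(?n+j) * (e x y n' j + e x y ?n j) * ?W j" unfolding h ..
      finally show "x*y * (A_last x y ?n j * ?W j) = (-1)^?n * ((-1)^j * e x y n' j * ?W j + (-1)^j * e x y ?n j * ?W j)"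
        by (simp only: power_add) (simp add: algebra_simps)
    qed
    thus ?thesis by (simp only: sum.distrib[symmetric] sum_distrib_left)
  qed
  have "x*y * (\<Sum>j<?n. A_last x y ?n j * ?W j) = x*y * (\<Sum>j<n'. A_last x y ?n j * ?W j) + x*y * (A_last x y ?n n' * ?W n')"
    by (simp add: algebra_simps)
  also have "x*y * (A_last x y ?n n' * ?W n') = (x*y - of_nat n' * (x+y)) * ?W n'"
    using A_top[of x y ?n] x y by simp
  also note A1
  also note S1
  also note S2
  also note sn
  finally have "x*y * (\<Sum>j<?n. A_last x y ?n j * ?W j) =
      - s * (s * Hop x y n' f i - s * ?W n' + (- s * Hop x y ?n f i - s * e x y ?n n' * ?W n' + s * ?W ?n))
      + (x*y - of_nat n' * (x+y)) * ?W n'" .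
  also have "\<dots> = - (s*s) * Hop x y n' f i + (s*s) * ?W n' + (s*s) * Hop x y ?n f i + (s*s) * e x y ?n n' * ?W n' - (s*s) * ?W ?n
      + (x*y - of_nat n' * (x+y)) * ?W n'" by (simp add: algebra_simps)
  also have "\<dots> = Hop x y ?n f i - Hop x y n' f i - ?W ?n + (1 + x + y + x*y) * ?W n'"
    unfolding sq e_sub by (simp add: algebra_simps)
  finally show ?thesis .
qed


definition Yv :: "'a::field \<Rightarrow> 'a \<Rightarrow> nat \<Rightarrow> nat \<Rightarrow> int \<Rightarrow> 'a" where
  "Yv x y m n' i = Hop x y n' (pp x y m) (i-1) - pp x y (m+n') (i-1) + x*y * pp x y (m+n') i"

lemma Gpt:
  fixes x y :: "'a::field"
  assumes x: "x \<noteq> 0" and y: "y \<noteq> 0"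
  shows "x*y*(\<Sum>j<Suc n'. A_last x y (Suc n') j * pp x y (m+j) i)
     = (x*y)^(Suc n') * pp x y m (i + int (Suc n')) + (Yv x y m n' i - Yv x y m n' (i+1))"
proof -
  have "x*y*(\<Sum>j<Suc n'. A_last x y (Suc n') j * pp x y (m+j) i)
     = x*y*(\<Sum>j<Suc n'. A_last x y (Suc n') j * (St x y ^^ j) (pp x y m) i)"
    by (simp add: pp_add)
  also have "\<dots> = Hop x y (Suc n') (pp x y m) i - Hop x y n' (pp x y m) i - (St x y ^^ (Suc n')) (pp x y m) i
      + (1 + x + y + x*y) * (St x y ^^ n') (pp x y m) i"
    by (rule alpha[OF x y])
  also have "\<dots> = (x*y)^(Suc n') * pp x y m (i + int (Suc n')) + (Yv x y m n' i - Yv x y m n' (i+1))"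
    unfolding pp_add Yv_def
    by (simp del: Hop.simps add: pp_Suc[of x y "m+n'", simplified] St_def algebra_simps)
      (simp add: algebra_simps)
  finally show ?thesis .
qed

lemma sum_nonneg_eq:
  assumes "\<And>l. R < l \<Longrightarrow> f l = 0"
  shows "sum_nonneg f = sum f {0..R}"
proof -
  have sub: "{l. 0 \<le> l \<and> f l \<noteq> 0} \<subseteq> {0..R}"
  proof
    fix l assume l: "l \<in> {l. 0 \<le> l \<and> f l \<noteq> 0}"
    hence "\<not> R < l" using assms by blast
    thus "l \<in> {0..R}" using l by auto
  qed
  show ?thesis unfolding sum_nonneg_def
    by (rule sum.mono_neutral_left) (use sub in auto)
qed

lemma sum_shift_int: "(\<Sum>l\<in>{a..b}. h (l + t)) = (\<Sum>i\<in>{a+t..b+(t::int)}. h i)"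
proof -
  have "(\<lambda>l. l + t) ` {a..b} = {a+t..b+t}"
  proof
    show "{a+t..b+t} \<subseteq> (\<lambda>l. l + t) ` {a..b}"
    proof
      fix i assume "i \<in> {a+t..b+t}"
      hence "i = (i - t) + t" "i - t \<in> {a..b}" by auto
      thus "i \<in> (\<lambda>l. l + t) ` {a..b}" by blast
    qed
  qed auto
  moreover have "inj_on (\<lambda>l. l + t) {a..b}" by (auto simp: inj_on_def)
  ultimately show ?thesis using sum.reindex[of "\<lambda>l. l + t" "{a..b}" h] by (simp add: comp_def)
qed

lemma sum_ext_int:
  assumes "\<And>i. bz < i \<Longrightarrow> h i = 0" "bz \<le> b" "bz \<le> (b'::int)"
  shows "sum h {a..b} = sum h {a..b'}"
proof -
  have "sum h {a..b} = sum h {a..max b b'}"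
    by (rule sum.mono_neutral_left) (use assms in auto)
  also have "\<dots> = sum h {a..b'}"
    by (rule sum.mono_neutral_left[symmetric]) (use assms in auto)
  finally show ?thesis .
qed

lemma telescope_int:
  fixes Y :: "int \<Rightarrow> 'a::ab_group_add"
  shows "(\<Sum>i\<in>{c..c - 1 + int t}. Y i - Y (i+1)) = Y c - Y (c + int t)"
proof (induction t)
  case 0 thus ?case by simp
next
  case (Suc t)
  have "{c..c - 1 + int (Suc t)} = insert (c + int t) {c..c - 1 + int t}" by auto
  moreover have "c + int t \<notin> {c..c - 1 + int t}" by auto
  ultimately have "(\<Sum>i\<in>{c..c - 1 + int (Suc t)}. Y i - Y (i+1)) = (Y (c + int t) - Y (c + int t + 1)) + (\<Sum>i\<in>{c..c - 1 + int t}. Y i - Y (i+1))"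
    by simp
  thus ?case using Suc by (simp add: algebra_simps)
qed

lemma telescope_int':
  fixes Y :: "int \<Rightarrow> 'a::ab_group_add"
  assumes "c \<le> b + 1"
  shows "(\<Sum>i\<in>{c..b}. Y i - Y (i+1)) = Y c - Y (b + 1)"
  using telescope_int[where c=c and t="nat (b + 1 - c)" and Y=Y] assms by simp


theorem lemma9:
  fixes x y :: "'a::field" and m n :: nat and k :: int
  assumes "x \<noteq> 0" and "y \<noteq> 0"
    and "1 \<le> n" and "m \<le> n" and "0 \<le> k"
  shows "(\<Sum>j<n. A_last x y n j * sum_nonneg (\<lambda>l. PPplus x y (m + j) k l))
       = PPplus x y (m + n - 1) k 0
         + (x * y) ^ (n - 1) * sum_nonneg (\<lambda>l. PP x y m 0 (int n - k + l))"
proof -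
  note x = assms(1) and y = assms(2) and k = assms(5)
  obtain n' where n: "n = Suc n'" using assms(3) by (cases n) auto
  define q where "q = x*y"
  have q0: "q \<noteq> 0" using x y by (simp add: q_def)
  define N where "N = m + n'"
  have NN: "m + n - 1 = N" by (simp add: N_def n)
  define B :: int where "B = int m + int n + k + 2"
  define Cf :: "(int \<Rightarrow> 'a) \<Rightarrow> int \<Rightarrow> 'a" where "Cf h c = (\<Sum>i\<in>{c..B}. h i)" for h c
  define qk where "qk = q ^ nat (k+1)"
  have T: "sum_nonneg (\<lambda>l. PPplus x y (m+j) k l) = Cf (pp x y (m+j)) (-k) - qk * Cf (pp x y (m+j)) (k+2)"
    if j: "j < n" for j
  proof -
    let ?M = "m+j"
    have sup: "\<And>i. int ?M < i \<Longrightarrow> pp x y ?M i = 0" using pp_supp by blast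
    have MB: "int ?M \<le> B - k" using j k by (simp add: B_def)
    have "sum_nonneg (\<lambda>l. PPplus x y ?M k l) = (\<Sum>l\<in>{0..B}. PPplus x y ?M k l)"
    proof (rule sum_nonneg_eq)
      fix l assume l: "B < l"
      have "pp x y ?M (l - k) = 0" "pp x y ?M (l + k + 2) = 0" using l MB k by (auto intro!: sup)
      thus "PPplus x y ?M k l = 0" using l k PPplus_refl[of l k x y ?M] MB by simp
    qed
    also have "\<dots> = (\<Sum>l\<in>{0..B}. pp x y ?M (l + (-k))) - qk * (\<Sum>l\<in>{0..B}. pp x y ?M (l + (k+2)))"
      unfolding sum_distrib_left sum_subtractf[symmetric]
      by (rule sum.cong[OF refl]) (use k in \<open>simp add: PPplus_refl qk_def q_def add.assoc\<close>)
    also have "(\<Sum>l\<in>{0..B}. pp x y ?M (l + (-k))) = Cf (pp x y ?M) (-k)"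
      unfolding sum_shift_int Cf_def add_0
      by (rule sum_ext_int[where bz="int ?M"]) (use sup MB k in auto)
    also have "(\<Sum>l\<in>{0..B}. pp x y ?M (l + (k+2))) = Cf (pp x y ?M) (k+2)"
      unfolding sum_shift_int Cf_def add_0
      by (rule sum_ext_int[where bz="int ?M"]) (use sup MB k in auto)
    finally show ?thesis by simp
  qed
  have Key: "q * (\<Sum>j<n. A_last x y n j * Cf (pp x y (m+j)) c) = q^n * Cf (pp x y m) (c + int n) + Yv x y m n' c"
    if c: "c \<le> B" for c
  proof -
    have "q * (\<Sum>j<n. A_last x y n j * Cf (pp x y (m+j)) c) = (\<Sum>i\<in>{c..B}. q * (\<Sum>j<n. A_last x y n j * pp x y (m+j) i))"
      unfolding Cf_def sum_distrib_left by (subst sum.swap) (simp add: sum_distrib_left)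
    also have "\<dots> = (\<Sum>i\<in>{c..B}. q^n * pp x y m (i + int n) + (Yv x y m n' i - Yv x y m n' (i+1)))"
      unfolding n q_def using Gpt[OF x y] by simp
    also have "\<dots> = q^n * (\<Sum>i\<in>{c..B}. pp x y m (i + int n)) + (Yv x y m n' c - Yv x y m n' (B+1))"
    proof -
      have tel: "(\<Sum>i\<in>{c..B}. Yv x y m n' i - Yv x y m n' (i+1)) = Yv x y m n' c - Yv x y m n' (B+1)"
        by (rule telescope_int') (use c in simp)
      show ?thesis unfolding sum.distrib sum_distrib_left tel ..
    qed
    also have "Yv x y m n' (B+1) = 0"
    proof -
      have "Hop x y n' (pp x y m) B = 0"
        by (rule Hop_supp[where K=m]) (use pp_supp k in \<open>auto simp: B_def n\<close>)
      moreover have "pp x y (m+n') B = 0" "pp x y (m+n') (B+1) = 0" using k by (auto intro!: pp_supp simp: B_def n)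
      ultimately show ?thesis by (simp add: Yv_def)
    qed
    also have "(\<Sum>i\<in>{c..B}. pp x y m (i + int n)) = Cf (pp x y m) (c + int n)"
      unfolding sum_shift_int Cf_def
      by (rule sum_ext_int[where bz="int m"]) (auto intro!: pp_supp simp: B_def k)
    finally show ?thesis by simp
  qed
  have Cz: "Cf (pp x y m) (k + 2 + int n) = 0"
    unfolding Cf_def by (rule sum.neutral) (use assms(4) k in \<open>auto intro!: pp_supp\<close>)
  have S: "Hop x y n' (pp x y m) (-k - 1) - pp x y N (-k - 1) = qk * (Hop x y n' (pp x y m) (k+1) - pp x y N (k+1))"
  proof -
    have "symq q (\<lambda>i. 1 * Hop x y n' (pp x y m) i + (-1) * pp x y N i)"
      unfolding q_def by (rule symq_lin[OF symq_Hop[OF symq_pp] symq_pp])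
    from this[unfolded symq_def, rule_format, of "nat (k+1)"] k show ?thesis
      by (simp add: qk_def)
  qed
  have LHS: "(\<Sum>j<n. A_last x y n j * sum_nonneg (\<lambda>l. PPplus x y (m + j) k l))
     = (\<Sum>j<n. A_last x y n j * Cf (pp x y (m+j)) (-k)) - qk * (\<Sum>j<n. A_last x y n j * Cf (pp x y (m+j)) (k+2))"
  proof -
    have "(\<Sum>j<n. A_last x y n j * sum_nonneg (\<lambda>l. PPplus x y (m + j) k l))
       = (\<Sum>j<n. A_last x y n j * (Cf (pp x y (m+j)) (-k) - qk * Cf (pp x y (m+j)) (k+2)))"
      by (rule sum.cong[OF refl]) (simp add: T)
    thus ?thesis by (simp add: sum_distrib_left sum_subtractf algebra_simps)
  qed
  have K1: "q * (\<Sum>j<n. A_last x y n j * Cf (pp x y (m+j)) (-k)) = q^n * Cf (pp x y m) (-k + int n) + Yv x y m n' (-k)"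
    by (rule Key) (use k in \<open>simp add: B_def\<close>)
  have K2: "q * (\<Sum>j<n. A_last x y n j * Cf (pp x y (m+j)) (k+2)) = q^n * Cf (pp x y m) (k+2 + int n) + Yv x y m n' (k+2)"
    by (rule Key) (simp add: B_def)
  have R1: "PPplus x y N k 0 = pp x y N (-k) - qk * pp x y N (k+2)"
    using PPplus_refl[of 0 k x y N] k by (simp add: qk_def q_def)
  have R2: "sum_nonneg (\<lambda>l. PP x y m 0 (int n - k + l)) = Cf (pp x y m) (-k + int n)"
  proof -
    have "sum_nonneg (\<lambda>l. PP x y m 0 (int n - k + l)) = (\<Sum>l\<in>{0..B}. pp x y m (l + (int n - k)))"
      unfolding PP_pp
      apply (subgoal_tac "(\<lambda>l. pp x y m (int n - k + l - 0)) = (\<lambda>l. pp x y m (l + (int n - k)))")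
       apply (simp only:)
      apply (rule sum_nonneg_eq)
      apply (auto intro!: pp_supp simp: B_def add.commute)
      done
    also have "\<dots> = Cf (pp x y m) (-k + int n)"
      unfolding sum_shift_int Cf_def add_0 diff_conv_add_uminus add.commute[of "int n"]
      by (rule sum_ext_int[where bz="int m"]) (auto intro!: pp_supp simp: B_def k)
    finally show ?thesis .
  qed
  have "q * (\<Sum>j<n. A_last x y n j * sum_nonneg (\<lambda>l. PPplus x y (m + j) k l))
     = q * (PPplus x y (m + n - 1) k 0 + q ^ (n - 1) * sum_nonneg (\<lambda>l. PP x y m 0 (int n - k + l)))"
  proof -
    have "q * (\<Sum>j<n. A_last x y n j * sum_nonneg (\<lambda>l. PPplus x y (m + j) k l))
       = (q^n * Cf (pp x y m) (-k + int n) + Yv x y m n' (-k)) - qk * (q^n * Cf (pp x y m) (k+2 + int n) + Yv x y m n' (k+2))"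
      unfolding LHS K1[symmetric] K2[symmetric] by (simp add: algebra_simps)
    also have "\<dots> = q^n * Cf (pp x y m) (-k + int n) + (Hop x y n' (pp x y m) (-k - 1) - pp x y N (-k - 1)) + q * pp x y N (-k)
        - qk * (Hop x y n' (pp x y m) (k+1) - pp x y N (k+1)) - qk * q * pp x y N (k+2)"
      unfolding Cz by (simp add: Yv_def N_def q_def algebra_simps)
    also have "\<dots> = q * (PPplus x y (m + n - 1) k 0 + q ^ (n - 1) * sum_nonneg (\<lambda>l. PP x y m 0 (int n - k + l)))"
      unfolding S NN R1 R2 by (simp add: n algebra_simps)
    finally show ?thesis .
  qed
  thus ?thesis using q0 by (simp add: q_def)
qed


end
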